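(* Let $0\le\alpha\le 1$ and $\beta>0$. Then $D_{\alpha,\beta}$ is a metric on the collection of all finite subsets of $\mathbb N$ if and only if $0\le\alpha\le \tfrac12$ and $\beta\ge \dfrac{1}{1-\alpha}$.
   Context: For finite sets $X,Y$ let $m(X,Y)=\min\{|X\setminus Y|,|Y\setminus X|\}$ and $M(X,Y)=\max\{|X\setminus Y|,|Y\setminus X|\}$. For $0\le\alpha\le1$ and $\beta>0$ the Tversky semimetric is $$D_{\alpha,\beta}(X,Y)=\begin{cases}\beta\,\dfrac{\alpha m(X,Y)+(1-\alpha)M(X,Y)}{|X\cap Y|+\beta\big(\alpha m(X,Y)+(1-\alpha)M(X,Y)\big)} & \text{if } X\cup Y\neq\emptyset,\\[2mm] 0 & \text{if } X=Y=\emptyset.\end{cases}$$ A metric is a function $d$ with $d(x,y)\ge0$, $d(x,y)=0$ iff $x=y$, $d(x,y)=d(y,x)$, and $d(x,y)\le d(x,z)+d(z,y)$. *)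

theory Defs
  imports Main Complex_Main
begin

definition mdiff :: "'a set \<Rightarrow> 'a set \<Rightarrow> nat" where
  "mdiff X Y = min (card (X - Y)) (card (Y - X))"

definition Mdiff :: "'a set \<Rightarrow> 'a set \<Rightarrow> nat" where
  "Mdiff X Y = max (card (X - Y)) (card (Y - X))"

definition tversky :: "real \<Rightarrow> real \<Rightarrow> 'a set \<Rightarrow> 'a set \<Rightarrow> real" where
  "tversky \<alpha> \<beta> X Y =
     (if X \<union> Y \<noteq> {} then
        \<beta> * (\<alpha> * real (mdiff X Y) + (1 - \<alpha>) * real (Mdiff X Y)) /
        (real (card (X \<inter> Y)) + \<beta> * (\<alpha> * real (mdiff X Y) + (1 - \<alpha>) * real (Mdiff X Y)))
      else 0)"

definition metric_on :: "'a set \<Rightarrow> ('a \<Rightarrow> 'a \<Rightarrow> real) \<Rightarrow> bool" where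
  "metric_on S d \<longleftrightarrow>
     (\<forall>x\<in>S. \<forall>y\<in>S. d x y \<ge> 0) \<and>
     (\<forall>x\<in>S. \<forall>y\<in>S. d x y = 0 \<longleftrightarrow> x = y) \<and>
     (\<forall>x\<in>S. \<forall>y\<in>S. d x y = d y x) \<and>
     (\<forall>x\<in>S. \<forall>y\<in>S. \<forall>z\<in>S. d x y \<le> d x z + d z y)"

end

theory Submission
  imports Defs
begin

lemma frac_tri:
  fixes u P Q c cp cq :: real
  assumes "u\<ge>0" "P\<ge>0" "Q\<ge>0" "c\<ge>0" "cp\<ge>0" "cq\<ge>0" "u \<le> P+Q" "cp \<le> c+Q" "cq \<le> c+P"
  shows "u/(u+c) \<le> P/(P+cp) + Q/(Q+cq)"
proof (cases "u = 0")
  case True thus ?thesis using assms by simp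
next
  case False
  hence up: "u > 0" using assms by simp
  have 1: "u/(u+c) \<le> (P+Q)/(P+Q+c)"
  proof -
    have "u*c \<le> (P+Q)*c" using assms by (intro mult_right_mono) auto
    thus ?thesis using up assms by (simp add: divide_simps algebra_simps)
  qed
  have 2: "P/(P+Q+c) \<le> P/(P+cp)"
  proof (cases "P = 0")
    case False thus ?thesis using assms by (intro divide_left_mono) auto
  qed simp
  have 3: "Q/(P+Q+c) \<le> Q/(Q+cq)"
  proof (cases "Q = 0")
    case False thus ?thesis using assms by (intro divide_left_mono) auto
  qed simp
  have "(P+Q)/(P+Q+c) = P/(P+Q+c) + Q/(P+Q+c)" by (simp add: add_divide_distrib)
  thus ?thesis using 1 2 3 by linarith
qed

definition sv :: "real \<Rightarrow> 'a set \<Rightarrow> 'a set \<Rightarrow> real" where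
  "sv \<alpha> X Y = \<alpha> * real (mdiff X Y) + (1 - \<alpha>) * real (Mdiff X Y)"

lemma tv_eq: "tversky \<alpha> \<beta> X Y = \<beta> * sv \<alpha> X Y / (real (card (X \<inter> Y)) + \<beta> * sv \<alpha> X Y)"
  by (cases "X \<union> Y = {}") (auto simp: tversky_def sv_def mdiff_def Mdiff_def)

lemma cross: fixes a b e f :: real assumes "0<b" "0<f" "a/b \<le> e/f" shows "a*f \<le> e*b"
proof -
  have "a/b * (b*f) \<le> e/f * (b*f)" using assms by (intro mult_right_mono) auto
  thus ?thesis using assms by (simp add: field_simps)
qed

lemma sv_alt: "sv \<alpha> X Y = \<alpha> * (real (card (X - Y)) + real (card (Y - X)))
     + (1 - 2*\<alpha>) * max (real (card (X - Y))) (real (card (Y - X)))"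
  by (simp add: sv_def mdiff_def Mdiff_def min_def max_def algebra_simps)

lemma sv_sym: "sv \<alpha> X Y = sv \<alpha> Y X"
  by (simp add: sv_def mdiff_def Mdiff_def min.commute max.commute)

lemma card_diff_tri:
  assumes "finite X" "finite Y" "finite Z"
  shows "card (X - Y) \<le> card (X - Z) + card (Z - Y)"
proof -
  have "card (X - Y) \<le> card ((X - Z) \<union> (Z - Y))"
    using assms by (intro card_mono) auto
  also have "\<dots> \<le> card (X - Z) + card (Z - Y)" by (rule card_Un_le)
  finally show ?thesis .
qed

lemma card_int_tri:
  assumes "finite X" "finite Y" "finite Z"
  shows "card (X \<inter> Z) \<le> card (X \<inter> Y) + card (Z - Y)"
proof -
  have "card (X \<inter> Z) \<le> card ((X \<inter> Y) \<union> (Z - Y))"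
    using assms by (intro card_mono) auto
  also have "\<dots> \<le> card (X \<inter> Y) + card (Z - Y)" by (rule card_Un_le)
  finally show ?thesis .
qed

lemma sv_tri:
  assumes "finite X" "finite Y" "finite Z" "0 \<le> \<alpha>" "\<alpha> \<le> 1/2"
  shows "sv \<alpha> X Y \<le> sv \<alpha> X Z + sv \<alpha> Z Y"
proof -
  have a: "real (card (X - Y)) \<le> real (card (X - Z)) + real (card (Z - Y))"
    using card_diff_tri[OF assms(1-3)] by linarith
  have b: "real (card (Y - X)) \<le> real (card (Y - Z)) + real (card (Z - X))"
    using card_diff_tri[OF assms(2,1,3)] by linarith
  have 1: "\<alpha> * (real (card (X - Y)) + real (card (Y - X))) \<le>
     \<alpha> * (real (card (X - Z)) + real (card (Z - X))) + \<alpha> * (real (card (Z - Y)) + real (card (Y - Z)))"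
    using a b assms(4) by (simp add: distrib_left[symmetric] mult_left_mono)
  have 2: "(1 - 2*\<alpha>) * max (real (card (X - Y))) (real (card (Y - X))) \<le>
     (1 - 2*\<alpha>) * max (real (card (X - Z))) (real (card (Z - X))) +
     (1 - 2*\<alpha>) * max (real (card (Z - Y))) (real (card (Y - Z)))"
  proof -
    have "max (real (card (X - Y))) (real (card (Y - X))) \<le>
       max (real (card (X - Z))) (real (card (Z - X))) + max (real (card (Z - Y))) (real (card (Y - Z)))"
      using a b by linarith
    thus ?thesis using assms(5) by (simp add: distrib_left[symmetric] mult_left_mono)
  qed
  show ?thesis unfolding sv_alt using 1 2 by linarith
qed

lemma sv_ge:
  assumes "0 \<le> \<alpha>" "\<alpha> \<le> 1"
  shows "sv \<alpha> X Y \<ge> (1 - \<alpha>) * real (card (Y - X))"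
proof -
  have "(1 - \<alpha>) * real (card (Y - X)) \<le> (1 - \<alpha>) * real (Mdiff X Y)"
    using assms by (intro mult_left_mono) (auto simp: Mdiff_def)
  moreover have "0 \<le> \<alpha> * real (mdiff X Y)" using assms by simp
  ultimately show ?thesis unfolding sv_def by linarith
qed

lemma sv_pos:
  assumes "0 \<le> \<alpha>" "\<alpha> < 1" "X \<noteq> Y" "finite X" "finite Y"
  shows "sv \<alpha> X Y > 0"
proof -
  have "card (X - Y) > 0 \<or> card (Y - X) > 0"
    using assms by (metis Diff_eq_empty_iff card_gt_0_iff finite_Diff subset_antisym)
  hence "real (Mdiff X Y) \<ge> 1" by (auto simp: Mdiff_def)
  hence "(1 - \<alpha>) * real (Mdiff X Y) > 0" using assms by simp
  moreover have "0 \<le> \<alpha> * real (mdiff X Y)" using assms by simp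
  ultimately show ?thesis unfolding sv_def by linarith
qed

lemma sv_self: "sv \<alpha> X X = 0" by (simp add: sv_def mdiff_def Mdiff_def)

lemma sufficiency:
  assumes "0 \<le> \<alpha>" "\<alpha> \<le> 1/2" "\<beta> > 0" "\<beta> * (1 - \<alpha>) \<ge> 1"
  shows "metric_on {X :: nat set. finite X} (tversky \<alpha> \<beta>)"
proof -
  have sv0: "\<And>X Y :: nat set. sv \<alpha> X Y \<ge> 0"
  proof -
    fix X Y
    have "0 \<le> (1 - \<alpha>) * real (card (Y - X))" using assms by simp
    moreover have "(1 - \<alpha>) * real (card (Y - X)) \<le> sv \<alpha> X Y" by (rule sv_ge) (use assms in auto)
    ultimately show "sv \<alpha> X Y \<ge> 0" by linarith
  qed
  have nn: "\<And>X Y :: nat set. tversky \<alpha> \<beta> X Y \<ge> 0"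
    unfolding tv_eq using sv0 assms by (intro divide_nonneg_nonneg add_nonneg_nonneg mult_nonneg_nonneg) auto
  have bs: "\<And>X Y :: nat set. real (card (Y - X)) \<le> \<beta> * sv \<alpha> X Y"
  proof -
    fix X Y :: "nat set"
    have "real (card (Y - X)) \<le> \<beta> * (1 - \<alpha>) * real (card (Y - X))"
      using assms(4) by (simp add: mult_le_cancel_right1)
    also have "\<dots> \<le> \<beta> * sv \<alpha> X Y" using sv_ge[where X=X and Y=Y] assms
      by (simp add: mult.assoc mult_left_mono)
    finally show "real (card (Y - X)) \<le> \<beta> * sv \<alpha> X Y" .
  qed
  have zero: "tversky \<alpha> \<beta> X Y = 0 \<longleftrightarrow> X = Y" if "finite X" "finite Y" for X Y :: "nat set"
  proof
    assume "X = Y" thus "tversky \<alpha> \<beta> X Y = 0" by (simp add: tv_eq sv_self)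
  next
    assume h: "tversky \<alpha> \<beta> X Y = 0"
    show "X = Y"
    proof (rule ccontr)
      assume "X \<noteq> Y"
      hence "sv \<alpha> X Y > 0" using sv_pos[of \<alpha> X Y] assms that by simp
      hence "\<beta> * sv \<alpha> X Y > 0" using assms by simp
      hence "tversky \<alpha> \<beta> X Y > 0" unfolding tv_eq by (intro divide_pos_pos) auto
      thus False using h by simp
    qed
  qed
  have sym: "tversky \<alpha> \<beta> X Y = tversky \<alpha> \<beta> Y X" for X Y :: "nat set"
    by (simp add: tv_eq sv_sym Int_commute)
  have tri: "tversky \<alpha> \<beta> X Y \<le> tversky \<alpha> \<beta> X Z + tversky \<alpha> \<beta> Z Y"
    if f: "finite X" "finite Y" "finite Z" for X Y Z :: "nat set"
  proof -
    have "\<beta> * sv \<alpha> X Y \<le> \<beta> * sv \<alpha> X Z + \<beta> * sv \<alpha> Z Y"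
      using sv_tri[OF f(1,2,3) assms(1,2)] assms(3) by (simp add: distrib_left[symmetric])
    moreover have "real (card (X \<inter> Z)) \<le> real (card (X \<inter> Y)) + \<beta> * sv \<alpha> Z Y"
    proof -
      have "real (card (X \<inter> Z)) \<le> real (card (X \<inter> Y)) + real (card (Z - Y))"
        using card_int_tri[OF f(1,2,3)] by (metis of_nat_add of_nat_le_iff)
      thus ?thesis using bs[where X=Y and Y=Z] arg_cong[OF sv_sym[of \<alpha> Y Z], of "\<lambda>t. \<beta> * t"] by linarith
    qed
    moreover have "real (card (Z \<inter> Y)) \<le> real (card (X \<inter> Y)) + \<beta> * sv \<alpha> X Z"
    proof -
      have "card (Y \<inter> Z) \<le> card (Y \<inter> X) + card (Z - X)" using card_int_tri[OF f(2,1,3)] .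
      thus ?thesis using bs[where X=X and Y=Z] by (simp add: Int_commute)
    qed
    ultimately have "\<beta> * sv \<alpha> X Y / (\<beta> * sv \<alpha> X Y + real (card (X \<inter> Y)))
      \<le> \<beta> * sv \<alpha> X Z / (\<beta> * sv \<alpha> X Z + real (card (X \<inter> Z))) +
        \<beta> * sv \<alpha> Z Y / (\<beta> * sv \<alpha> Z Y + real (card (Z \<inter> Y)))"
      using sv0 assms(3) by (intro frac_tri) auto
    thus ?thesis unfolding tv_eq by (simp add: add.commute)
  qed
  show ?thesis unfolding metric_on_def using nn zero sym tri by auto
qed

lemma sets_facts: fixes c :: nat
  shows "insert c {..<c} - insert (Suc c) {..<c} = {c}"
   "insert (Suc c) {..<c} - insert c {..<c} = {Suc c}"
   "insert c {..<c} \<inter> insert (Suc c) {..<c} = {..<c}"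
   "insert c {..<c} - insert c (insert (Suc c) {..<c}) = {}"
   "insert c (insert (Suc c) {..<c}) - insert c {..<c} = {Suc c}"
   "insert c {..<c} \<inter> insert c (insert (Suc c) {..<c}) = insert c {..<c}"
   "insert c (insert (Suc c) {..<c}) - insert (Suc c) {..<c} = {c}"
   "insert (Suc c) {..<c} - insert c (insert (Suc c) {..<c}) = {}"
   "insert c (insert (Suc c) {..<c}) \<inter> insert (Suc c) {..<c} = insert (Suc c) {..<c}"
  by auto

lemma necessity_ineq:
  assumes "metric_on {X :: nat set. finite X} (tversky \<alpha> \<beta>)"
    "0 \<le> \<alpha>" "\<alpha> \<le> 1" "\<beta> > 0"
  shows "real c * (2*\<alpha> - 1) + 1 \<le> \<beta> * (1 - \<alpha>)"
proof -
  define X where "X = insert c {..<c}"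
  define Y where "Y = insert (Suc c) {..<c}"
  define Z where "Z = insert c (insert (Suc c) {..<c})"
  have fin: "finite X" "finite Y" "finite Z" by (auto simp: X_def Y_def Z_def)
  have tri: "tversky \<alpha> \<beta> X Y \<le> tversky \<alpha> \<beta> X Z + tversky \<alpha> \<beta> Z Y"
    using assms(1) fin unfolding metric_on_def by blast
  note sf = sets_facts[of c, folded X_def Y_def Z_def]
  have cf: "card {..<c} = c" "card X = Suc c" "card Y = Suc c"
    by (auto simp: X_def Y_def)
  have d: "card (X - Y) = 1" "card (Y - X) = 1" "card (X \<inter> Y) = c"
     "card (X - Z) = 0" "card (Z - X) = 1" "card (X \<inter> Z) = Suc c"
     "card (Z - Y) = 1" "card (Y - Z) = 0" "card (Z \<inter> Y) = Suc c"
    unfolding sf using cf by simp_all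
  have e1: "tversky \<alpha> \<beta> X Y = \<beta> / (real c + \<beta>)"
    unfolding tv_eq sv_def mdiff_def Mdiff_def d by simp
  have e2: "tversky \<alpha> \<beta> X Z = \<beta> * (1 - \<alpha>) / (1 + real c + \<beta> * (1 - \<alpha>))"
    unfolding tv_eq sv_def mdiff_def Mdiff_def d by simp
  have e3: "tversky \<alpha> \<beta> Z Y = \<beta> * (1 - \<alpha>) / (1 + real c + \<beta> * (1 - \<alpha>))"
    unfolding tv_eq sv_def mdiff_def Mdiff_def d by simp
  have h: "\<beta> / (real c + \<beta>) \<le> 2 * (\<beta> * (1 - \<alpha>)) / (1 + real c + \<beta> * (1 - \<alpha>))"
    using tri unfolding e1 e2 e3 by simp
  have p1: "real c + \<beta> > 0" using assms by simp
  have p2: "1 + real c + \<beta> * (1 - \<alpha>) > 0" using assms by (simp add: add_pos_nonneg)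
  have "\<beta> * (1 + real c + \<beta> * (1 - \<alpha>)) \<le> 2 * (\<beta> * (1 - \<alpha>)) * (real c + \<beta>)"
    by (rule cross[OF p1 p2 h])
  hence "\<beta> * (1 + real c + \<beta> * (1 - \<alpha>)) \<le> \<beta> * (2 * (1 - \<alpha>) * (real c + \<beta>))"
    by (simp add: algebra_simps)
  hence "1 + real c + \<beta> * (1 - \<alpha>) \<le> 2 * (1 - \<alpha>) * (real c + \<beta>)"
    using assms(4) by simp
  thus ?thesis by (simp add: algebra_simps)
qed

theorem theorem3:
  fixes \<alpha> \<beta> :: real
  assumes "0 \<le> \<alpha>" "\<alpha> \<le> 1" "\<beta> > 0"
  shows "metric_on {X :: nat set. finite X} (tversky \<alpha> \<beta>)
         \<longleftrightarrow> (\<alpha> \<le> 1/2 \<and> \<beta> \<ge> 1 / (1 - \<alpha>))"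
proof
  assume m: "metric_on {X :: nat set. finite X} (tversky \<alpha> \<beta>)"
  have a: "\<alpha> \<le> 1/2"
  proof (rule ccontr)
    assume "\<not> \<alpha> \<le> 1/2"
    hence pos: "2*\<alpha> - 1 > 0" by simp
    define c where "c = nat \<lceil>\<beta> / (2*\<alpha> - 1)\<rceil>"
    have "real c \<ge> \<beta> / (2*\<alpha> - 1)" unfolding c_def by linarith
    hence "real c * (2*\<alpha> - 1) \<ge> \<beta>" using pos by (simp add: divide_simps)
    moreover have "\<beta> * (1 - \<alpha>) \<le> \<beta>" using assms by (simp add: mult_le_cancel_left1)
    moreover note necessity_ineq[OF m assms, of c]
    ultimately show False by linarith
  qed
  have "1 \<le> \<beta> * (1 - \<alpha>)" using necessity_ineq[OF m assms, of 0] by simp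
  hence "1 / (1 - \<alpha>) \<le> \<beta>" using a by (simp add: divide_simps mult.commute)
  thus "\<alpha> \<le> 1/2 \<and> \<beta> \<ge> 1 / (1 - \<alpha>)" using a by simp
next
  assume h: "\<alpha> \<le> 1/2 \<and> \<beta> \<ge> 1 / (1 - \<alpha>)"
  hence "\<beta> * (1 - \<alpha>) \<ge> 1" by (simp add: divide_simps)
  thus "metric_on {X :: nat set. finite X} (tversky \<alpha> \<beta>)"
    using sufficiency assms h by blast
qed

end
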